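(* Let $n\ge1$, $p$ a prime, and for $m\ge1$ let $Y_m$ be the subspace of $\Sigma(n,p)$ spanned by all $\overline{B}_q$ where $q$ has at least $m$ components. Then for every $m\ge1$, $Y_m\,\mathcal{R}(n,p)\subseteq Y_{m+1}$, where $\mathcal{R}(n,p)$ is the radical of $\Sigma(n,p)$.
   Context: A composition of $n$ is a sequence of positive integers with sum $n$. The descent algebra $\Sigma_n$ has basis $\{B_q\}$ indexed by compositions of $n$ with multiplication $B_qB_r=\sum_{Z\in S(q,r)}B_{c(Z)}$, where for $q=[a_1,\dots,a_s]$, $r=[b_1,\dots,b_t]$, $S(q,r)$ is the set of $s\times t$ non-negative integer matrices with row sums $a_i$ and column sums $b_j$, and $c(Z)$ is the composition obtained by reading the entries of $Z$ row by row and omitting zeros. Let $\mathcal{Z}_n$ be the subring of integral combinations of the $B_q$ and $\Sigma(n,p)=\mathcal{Z}_n/p\mathcal{Z}_n$, an $\mathbb{F}_p$-algebra with basis $\overline{B}_q$ (images of $B_q$); $\mathcal{R}(n,p)$ denotes its (Jacobson) radical. For a subspace $Y$ and ideal $\mathcal{R}$, $Y\mathcal{R}$ denotes the span of all products $yx$ with $y\in Y$, $x\in\mathcal{R}$. *)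

theory Defs
  imports "HOL-Computational_Algebra.Primes"
begin

definition comps :: "nat \<Rightarrow> nat list set" where
  "comps n = {q. 0 \<notin> set q \<and> sum_list q = n}"

definition smats :: "nat list \<Rightarrow> nat list \<Rightarrow> nat list list set" where
  "smats q r = {Z. length Z = length q \<and>
      (\<forall>i<length q. length (Z!i) = length r \<and> sum_list (Z!i) = q!i) \<and>
      (\<forall>j<length r. (\<Sum>i<length q. Z!i!j) = r!j)}"

definition cZ :: "nat list list \<Rightarrow> nat list" where
  "cZ Z = filter (\<lambda>x. x \<noteq> 0) (concat Z)"

text \<open>Structure constant: coefficient of B_w in B_q B_r.\<close>
definition mcoef :: "nat list \<Rightarrow> nat list \<Rightarrow> nat list \<Rightarrow> nat" where
  "mcoef q r w = card {Z \<in> smats q r. cZ Z = w}"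

text \<open>Elements of Sigma(n,p) = Z_n / p Z_n: coefficient functions on compositions of n,
  with values in {0..<p} (residues mod p), zero outside compositions of n.
  The function f represents sum_q f(q) * (image of B_q).\<close>
definition sig :: "nat \<Rightarrow> nat \<Rightarrow> (nat list \<Rightarrow> int) set" where
  "sig n p = {f. \<forall>q. f q \<in> {0..<int p} \<and> (q \<notin> comps n \<longrightarrow> f q = 0)}"

definition sadd :: "nat \<Rightarrow> nat \<Rightarrow> (nat list \<Rightarrow> int) \<Rightarrow> (nat list \<Rightarrow> int) \<Rightarrow> (nat list \<Rightarrow> int)" where
  "sadd n p f g = (\<lambda>w. if w \<in> comps n then (f w + g w) mod int p else 0)"

definition ssub :: "nat \<Rightarrow> nat \<Rightarrow> (nat list \<Rightarrow> int) \<Rightarrow> (nat list \<Rightarrow> int) \<Rightarrow> (nat list \<Rightarrow> int)" where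
  "ssub n p f g = (\<lambda>w. if w \<in> comps n then (f w - g w) mod int p else 0)"

definition ssmul :: "nat \<Rightarrow> nat \<Rightarrow> int \<Rightarrow> (nat list \<Rightarrow> int) \<Rightarrow> (nat list \<Rightarrow> int)" where
  "ssmul n p c f = (\<lambda>w. if w \<in> comps n then (c * f w) mod int p else 0)"

definition szero :: "nat list \<Rightarrow> int" where
  "szero = (\<lambda>w. 0)"

text \<open>Multiplication induced by B_q B_r = sum_{Z in S(q,r)} B_{c(Z)}, reduced mod p.\<close>
definition smult :: "nat \<Rightarrow> nat \<Rightarrow> (nat list \<Rightarrow> int) \<Rightarrow> (nat list \<Rightarrow> int) \<Rightarrow> (nat list \<Rightarrow> int)" where
  "smult n p f g = (\<lambda>w. if w \<in> comps n then
      (\<Sum>q\<in>comps n. \<Sum>r\<in>comps n. f q * g r * int (mcoef q r w)) mod int p else 0)"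

text \<open>Identity element: the image of B_[n].\<close>
definition sone :: "nat \<Rightarrow> nat \<Rightarrow> nat list \<Rightarrow> int" where
  "sone n p = (\<lambda>w. if w = [n] then 1 mod int p else 0)"

text \<open>Jacobson radical, via the standard element-wise characterization:
  x is in J(A) iff 1 - y x is left invertible for every y in A.\<close>
definition jrad :: "nat \<Rightarrow> nat \<Rightarrow> (nat list \<Rightarrow> int) set" where
  "jrad n p = {x \<in> sig n p. \<forall>y\<in>sig n p. \<exists>z\<in>sig n p.
      smult n p z (ssub n p (sone n p) (smult n p y x)) = sone n p}"

definition Yspace :: "nat \<Rightarrow> nat \<Rightarrow> nat \<Rightarrow> (nat list \<Rightarrow> int) set" where
  "Yspace n p m = {f \<in> sig n p. \<forall>q. length q < m \<longrightarrow> f q = 0}"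

inductive_set prodspan :: "nat \<Rightarrow> nat \<Rightarrow> (nat list \<Rightarrow> int) set \<Rightarrow> (nat list \<Rightarrow> int) set
    \<Rightarrow> (nat list \<Rightarrow> int) set"
  for n p Y R where
  zero: "szero \<in> prodspan n p Y R"
| prod: "y \<in> Y \<Longrightarrow> x \<in> R \<Longrightarrow> smult n p y x \<in> prodspan n p Y R"
| add: "a \<in> prodspan n p Y R \<Longrightarrow> b \<in> prodspan n p Y R \<Longrightarrow> sadd n p a b \<in> prodspan n p Y R"
| smul: "a \<in> prodspan n p Y R \<Longrightarrow> ssmul n p c a \<in> prodspan n p Y R"

end

theory Submission
  imports Defs "HOL-Number_Theory.Cong" "HOL-Library.FuncSet"
begin


lemma sum_list_map_upt0: "sum_list (map f [0..<t]) = (\<Sum>k<t. f k)"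
  by (simp add: interv_sum_list_conv_sum_set_nat atLeast0LessThan)

lemma sum_list_filter_nz: "sum_list (filter (\<lambda>x. x \<noteq> 0) xs) = sum_list (xs::nat list)"
  by (induction xs) auto

lemma sum_list_concat_nat: "sum_list (concat Z) = sum_list (map sum_list (Z::nat list list))"
  by (induction Z) auto

lemma sum_list_nth_sum: "sum_list (xs::nat list) = (\<Sum>i<length xs. xs!i)"
  by (metis sum_list_map_upt0 map_nth)

definition oh :: "nat \<Rightarrow> nat \<Rightarrow> nat \<Rightarrow> nat list" where
  "oh j c t = map (\<lambda>k. if k = j then c else 0) [0..<t]"

lemma oh_length[simp]: "length (oh j c t) = t" by (simp add: oh_def)
lemma oh_nth: "k < t \<Longrightarrow> oh j c t ! k = (if k = j then c else 0)" by (simp add: oh_def)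
lemma oh_sum: "j < t \<Longrightarrow> sum_list (oh j c t) = c"
  unfolding oh_def sum_list_map_upt0 by simp

lemma filter_map_delta: "distinct xs \<Longrightarrow> c \<noteq> 0 \<Longrightarrow>
  filter (\<lambda>x. x \<noteq> 0) (map (\<lambda>k. if k = j then c else (0::nat)) xs) = (if j \<in> set xs then [c] else [])"
proof (induction xs)
  case Nil then show ?case by simp
next
  case (Cons a xs) then show ?case by auto
qed

lemma oh_filter: assumes "j < t" "c \<noteq> 0" shows "filter (\<lambda>x. x \<noteq> 0) (oh j c t) = [c]"
  using filter_map_delta[of "[0..<t]" c j] assms unfolding oh_def by simp

lemma filter_nonempty: "sum_list (y::nat list) > 0 \<Longrightarrow> length (filter (\<lambda>x. x \<noteq> 0) y) \<ge> 1"
  by (induction y) auto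

lemma concat_filter_len:
  assumes "\<forall>y\<in>set Z. sum_list (y::nat list) > 0"
  shows "length (filter (\<lambda>x. x \<noteq> 0) (concat Z)) \<ge> length Z \<and>
    (length (filter (\<lambda>x. x \<noteq> 0) (concat Z)) = length Z \<longrightarrow>
       (\<forall>y\<in>set Z. length (filter (\<lambda>x. x \<noteq> 0) y) = 1))"
  using assms
proof (induction Z)
  case Nil then show ?case by simp
next
  case (Cons y Z)
  have "length (filter (\<lambda>x. x \<noteq> 0) y) \<ge> 1" using Cons.prems filter_nonempty by auto
  with Cons show ?case by auto
qed

lemma one_filter_row:
  assumes "length (filter (\<lambda>x. x \<noteq> 0) y) = 1"
  shows "filter (\<lambda>x. x \<noteq> 0) y = [sum_list (y::nat list)]"
proof -
  obtain x where x: "filter (\<lambda>x. x \<noteq> 0) y = [x]" using assms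
    by (metis length_0_conv length_Suc_conv One_nat_def)
  then have "sum_list y = x" by (metis sum_list_filter_nz sum_list_simps add_0_right)
  then show ?thesis using x by simp
qed

lemma one_filter_oh:
  assumes "length (filter (\<lambda>x. x \<noteq> 0) y) = 1" "length y = t"
  shows "\<exists>j<t. y = oh j (sum_list (y::nat list)) t \<and> y!j \<noteq> 0"
proof -
  have "card {i. i < length y \<and> y!i \<noteq> 0} = 1" using assms(1) unfolding length_filter_conv_card .
  then obtain j where j: "{i. i < length y \<and> y!i \<noteq> 0} = {j}" using card_1_singletonE by blast
  then have jt: "j < t" "y!j \<noteq> 0" using assms(2) by auto
  have z: "\<And>k. k < t \<Longrightarrow> k \<noteq> j \<Longrightarrow> y!k = 0"
  proof -
    fix k assume "k < t" "k \<noteq> j"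
    then have "k \<notin> {i. i < length y \<and> y!i \<noteq> 0}" using j by blast
    then show "y!k = 0" using \<open>k < t\<close> assms(2) by blast
  qed
  have "sum_list y = (\<Sum>i<t. y!i)" using sum_list_nth_sum assms(2) by metis
  also have "\<dots> = y!j + (\<Sum>i\<in>{..<t}-{j}. y!i)" using jt by (simp add: sum.remove)
  also have "(\<Sum>i\<in>{..<t}-{j}. y!i) = 0" by (rule sum.neutral) (use z in blast)
  finally have s: "sum_list y = y!j" by simp
  have "y = oh j (sum_list y) t"
  proof (rule nth_equalityI)
    show "length y = length (oh j (sum_list y) t)" using assms(2) by simp
    fix k assume "k < length y"
    then have k: "k < t" using assms(2) by simp
    show "y!k = oh j (sum_list y) t ! k"
      using k z[OF k] s by (cases "k = j") (simp_all add: oh_nth)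
  qed
  with jt show ?thesis by blast
qed



lemma smats_rows: "Z \<in> smats q r \<Longrightarrow> map sum_list Z = q"
  unfolding smats_def by (auto intro: nth_equalityI)

lemma smats_pos: "Z \<in> smats q r \<Longrightarrow> 0 \<notin> set q \<Longrightarrow> \<forall>y\<in>set Z. sum_list y > 0"
  by (metis gr0I image_eqI list.set_map smats_rows)

lemma smats_cZ:
  assumes "Z \<in> smats q r" "0 \<notin> set q"
  shows "length (cZ Z) \<ge> length q" "length (cZ Z) = length q \<Longrightarrow> cZ Z = q"
proof -
  have L: "length Z = length q" using assms smats_def by auto
  note cf = concat_filter_len[OF smats_pos[OF assms]]
  show "length (cZ Z) \<ge> length q" using cf L unfolding cZ_def by simp
  assume "length (cZ Z) = length q"
  then have "\<forall>y\<in>set Z. length (filter (\<lambda>x. x \<noteq> 0) y) = 1" using cf L unfolding cZ_def by simp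
  then have eq: "map (filter (\<lambda>x. x \<noteq> 0)) Z = map (\<lambda>y. [sum_list y]) Z"
    using one_filter_row by auto
  have "cZ Z = concat (map (\<lambda>y. [sum_list y]) Z)" unfolding cZ_def filter_concat eq by (rule refl)
  also have "\<dots> = map sum_list Z" by (induction Z) auto
  finally show "cZ Z = q" using smats_rows[OF assms(1)] by simp
qed

lemma cZ_comps: "q \<in> comps n \<Longrightarrow> Z \<in> smats q r \<Longrightarrow> cZ Z \<in> comps n"
proof -
  assume a: "q \<in> comps n" "Z \<in> smats q r"
  have "sum_list (cZ Z) = sum_list (concat Z)" unfolding cZ_def by (rule sum_list_filter_nz)
  also have "\<dots> = n" using a unfolding sum_list_concat_nat by (simp add: smats_rows comps_def)
  finally show ?thesis unfolding comps_def cZ_def by auto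
qed

lemma length_le_sum: "0 \<notin> set (xs::nat list) \<Longrightarrow> length xs \<le> sum_list xs"
  by (induction xs) (auto simp: Suc_le_eq)

lemma finite_comps: "finite (comps n)"
proof -
  have "comps n \<subseteq> {xs. set xs \<subseteq> {..n} \<and> length xs \<le> n}"
    unfolding comps_def using length_le_sum member_le_sum_list by fastforce
  then show ?thesis using finite_lists_length_le finite_subset by blast
qed

lemma finite_smats: "finite (smats q r)"
proof -
  let ?R = "{xs. set xs \<subseteq> {..sum_list q} \<and> length xs = length r}"
  have fR: "finite ?R" by (rule finite_lists_length_eq) simp
  have "smats q r \<subseteq> {Z. set Z \<subseteq> ?R \<and> length Z = length q}"
  proof
    fix Z assume Z: "Z \<in> smats q r"
    have "\<forall>y\<in>set Z. length y = length r \<and> set y \<subseteq> {..sum_list q}"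
    proof
      fix y assume y: "y \<in> set Z"
      then obtain i where i: "i < length Z" "y = Z!i" by (metis in_set_conv_nth)
      have "length y = length r" "sum_list y = q!i" using Z i unfolding smats_def by auto
      moreover have "q!i \<le> sum_list q" using i Z unfolding smats_def by (auto intro: elem_le_sum_list)
      ultimately show "length y = length r \<and> set y \<subseteq> {..sum_list q}"
        using member_le_sum_list by fastforce
    qed
    then show "Z \<in> {Z. set Z \<subseteq> ?R \<and> length Z = length q}" using Z unfolding smats_def by auto
  qed
  then show ?thesis using finite_lists_length_eq[OF fR] finite_subset by blast
qed



definition fib :: "nat list \<Rightarrow> (nat \<Rightarrow> 'a) \<Rightarrow> 'a \<Rightarrow> nat" where
  "fib w f a = (\<Sum>i<length w. if f i = a then w!i else 0)"

definition cntset :: "nat list \<Rightarrow> 'a set \<Rightarrow> ('a \<Rightarrow> nat) \<Rightarrow> (nat \<Rightarrow> 'a) set" where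
  "cntset w A v = {f \<in> {..<length w} \<rightarrow>\<^sub>E A. \<forall>a\<in>A. fib w f a = v a}"

lemma fib_cong: "(\<And>i. i < length w \<Longrightarrow> (f i = a) = (g i = b)) \<Longrightarrow> fib w f a = fib w g b"
  unfolding fib_def by (rule sum.cong) auto

lemma fib_ge: "i < length w \<Longrightarrow> w!i \<le> fib w f (f i)"
  unfolding fib_def
  by (rule order_trans[OF _ member_le_sum[of i]]) auto

lemma finite_cntset: "finite A \<Longrightarrow> finite (cntset w A v)"
  unfolding cntset_def by (rule finite_subset[of _ "{..<length w} \<rightarrow>\<^sub>E A"]) (auto intro: finite_PiE)

lemma reindex:
  assumes inj: "inj_on \<phi> A" and sub: "\<phi> ` A \<subseteq> B" and val: "\<forall>a\<in>A. vB (\<phi> a) = vA a"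
    and out: "\<forall>b\<in>B - \<phi>`A. vB b = 0" and w0: "0 \<notin> set w"
  shows "card (cntset w A vA) = card (cntset w B vB)"
proof -
  let ?s = "length w"
  define F where "F f = (\<lambda>i\<in>{..<?s}. \<phi> (f i))" for f :: "nat \<Rightarrow> 'a"
  define G where "G g = (\<lambda>i\<in>{..<?s}. inv_into A \<phi> (g i))" for g :: "nat \<Rightarrow> 'b"
  have wpos: "\<And>i. i < ?s \<Longrightarrow> w!i > 0" using w0 by (metis gr0I nth_mem)
  have img: "g i \<in> \<phi> ` A" if g: "g \<in> cntset w B vB" and i: "i < ?s" for g i
  proof -
    have gi: "g i \<in> B" using g i unfolding cntset_def by auto
    have "fib w g (g i) > 0" using fib_ge[OF i, of g] wpos[OF i] by linarith
    then have "vB (g i) \<noteq> 0" using g gi unfolding cntset_def by auto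
    then show ?thesis using out gi by (meson DiffI)
  qed
  have "bij_betw F (cntset w A vA) (cntset w B vB)"
  proof (rule bij_betw_byWitness[where f'=G])
    show "\<forall>f\<in>cntset w A vA. G (F f) = f"
    proof
      fix f assume f: "f \<in> cntset w A vA"
      show "G (F f) = f"
      proof
        fix i show "G (F f) i = f i"
          using f inj unfolding G_def F_def cntset_def by (auto simp: PiE_def extensional_def Pi_def inv_into_f_f)
      qed
    qed
    show "\<forall>g\<in>cntset w B vB. F (G g) = g"
    proof
      fix g assume g: "g \<in> cntset w B vB"
      show "F (G g) = g"
      proof
        fix i show "F (G g) i = g i"
          using g img[OF g] unfolding G_def F_def cntset_def
          by (auto simp: PiE_def extensional_def f_inv_into_f)
      qed
    qed
    show "F ` cntset w A vA \<subseteq> cntset w B vB"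
    proof
      fix h assume "h \<in> F ` cntset w A vA"
      then obtain f where f: "f \<in> cntset w A vA" and h: "h = F f" by blast
      have fA: "\<And>i. i < ?s \<Longrightarrow> f i \<in> A" using f unfolding cntset_def by auto
      have "h \<in> {..<?s} \<rightarrow>\<^sub>E B" using fA sub h unfolding F_def by auto
      moreover have "fib w h b = vB b" if b: "b \<in> B" for b
      proof (cases "b \<in> \<phi> ` A")
        case True
        then obtain a where a: "a \<in> A" "b = \<phi> a" by blast
        have "fib w h b = fib w f a"
          by (rule fib_cong) (use a fA inj h in \<open>auto simp: F_def inj_on_def\<close>)
        then show ?thesis using f a val unfolding cntset_def by auto
      next
        case False
        have "fib w h b = 0" unfolding fib_def using False fA h F_def
          by (intro sum.neutral) auto
        then show ?thesis using out b False by auto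
      qed
      ultimately show "h \<in> cntset w B vB" unfolding cntset_def by auto
    qed
    show "G ` cntset w B vB \<subseteq> cntset w A vA"
    proof
      fix h assume "h \<in> G ` cntset w B vB"
      then obtain g where g: "g \<in> cntset w B vB" and h: "h = G g" by blast
      have hA: "\<And>i. i < ?s \<Longrightarrow> h i \<in> A" using img[OF g] h unfolding G_def
        by (auto intro: inv_into_into)
      have "h \<in> {..<?s} \<rightarrow>\<^sub>E A" using hA h unfolding G_def by auto
      moreover have "fib w h a = vA a" if a: "a \<in> A" for a
      proof -
        have "fib w h a = fib w g (\<phi> a)"
        proof (rule fib_cong)
          fix i assume i: "i < ?s"
          have "h i = inv_into A \<phi> (g i)" using h i unfolding G_def by simp
          then have hi: "\<phi> (h i) = g i" using f_inv_into_f[OF img[OF g i]] by simp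
          show "(h i = a) = (g i = \<phi> a)"
          proof
            assume "h i = a" then show "g i = \<phi> a" using hi by simp
          next
            assume "g i = \<phi> a" then have "\<phi> (h i) = \<phi> a" using hi by simp
            then show "h i = a" using inj_onD[OF inj _ hA[OF i] a] by simp
          qed
        qed
        then show ?thesis using g a sub val unfolding cntset_def by auto
      qed
      ultimately show "h \<in> cntset w A vA" unfolding cntset_def by auto
    qed
  qed
  then show ?thesis by (rule bij_betw_same_card)
qed



lemma fib_pair_fst:
  fixes t' :: nat
  assumes "\<forall>i<length w. g i < t'"
  shows "fib w f j = (\<Sum>k<t'. fib w (\<lambda>i. (f i, g i)) (j,k))"
proof -
  have "(\<Sum>k<t'. fib w (\<lambda>i. (f i, g i)) (j,k))
     = (\<Sum>i<length w. \<Sum>k<t'. if (f i, g i) = (j,k) then w!i else 0)"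
    unfolding fib_def by (rule sum.swap)
  also have "\<dots> = (\<Sum>i<length w. if f i = j then w!i else 0)"
  proof (rule sum.cong[OF refl])
    fix i assume "i \<in> {..<length w}"
    then have gi: "g i \<in> {..<t'}" using assms by auto
    have "(\<Sum>k<t'. if (f i, g i) = (j,k) then w!i else 0) = (\<Sum>k<t'. if k = g i then (if f i = j then w!i else 0) else 0)"
      by (rule sum.cong) auto
    also have "\<dots> = (if f i = j then w!i else 0)" using gi by (subst sum.delta) auto
    finally show "(\<Sum>k<t'. if (f i, g i) = (j,k) then w!i else 0) = (if f i = j then w!i else 0)" .
  qed
  finally show ?thesis unfolding fib_def by simp
qed

lemma fib_pair_snd:
  fixes t :: nat
  assumes "\<forall>i<length w. f i < t"
  shows "fib w g k = (\<Sum>j<t. fib w (\<lambda>i. (f i, g i)) (j,k))"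
proof -
  have "(\<Sum>j<t. fib w (\<lambda>i. (f i, g i)) (j,k))
     = (\<Sum>i<length w. \<Sum>j<t. if (f i, g i) = (j,k) then w!i else 0)"
    unfolding fib_def by (rule sum.swap)
  also have "\<dots> = (\<Sum>i<length w. if g i = k then w!i else 0)"
  proof (rule sum.cong[OF refl])
    fix i assume "i \<in> {..<length w}"
    then have fi: "f i \<in> {..<t}" using assms by auto
    have "(\<Sum>j<t. if (f i, g i) = (j,k) then w!i else 0) = (\<Sum>j<t. if j = f i then (if g i = k then w!i else 0) else 0)"
      by (rule sum.cong) auto
    also have "\<dots> = (if g i = k then w!i else 0)" using fi by (subst sum.delta) auto
    finally show "(\<Sum>j<t. if (f i, g i) = (j,k) then w!i else 0) = (if g i = k then w!i else 0)" .
  qed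
  finally show ?thesis unfolding fib_def by simp
qed

lemma mackey:
  fixes w r u :: "nat list"
  shows "card (cntset w {..<length r} (nth r)) * card (cntset w {..<length u} (nth u))
    = (\<Sum>Z\<in>smats r u. card (cntset w ({..<length r} \<times> {..<length u}) (\<lambda>(j,k). Z!j!k)))"
proof -
  let ?s = "length w" and ?t = "length r" and ?t' = "length u"
  let ?A = "cntset w {..<?t} (nth r) \<times> cntset w {..<?t'} (nth u)"
  let ?T = "\<lambda>Z. cntset w ({..<?t} \<times> {..<?t'}) (\<lambda>(j,k). Z!j!k)"
  let ?A' = "Sigma (smats r u) ?T"
  define Zm where "Zm f g = map (\<lambda>j. map (\<lambda>k. fib w (\<lambda>i. (f i, g i)) (j,k)) [0..<?t']) [0..<?t]"
    for f g :: "nat \<Rightarrow> nat"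
  define \<Phi> where "\<Phi> fg = (Zm (fst fg) (snd fg), \<lambda>i\<in>{..<?s}. (fst fg i, snd fg i))"
    for fg :: "(nat \<Rightarrow> nat) \<times> (nat \<Rightarrow> nat)"
  define \<Psi> where "\<Psi> Zh = ((\<lambda>i\<in>{..<?s}. fst (snd Zh i)), (\<lambda>i\<in>{..<?s}. snd (snd Zh i)))"
    for Zh :: "nat list list \<times> (nat \<Rightarrow> nat \<times> nat)"
  have bij: "bij_betw \<Phi> ?A ?A'"
  proof (rule bij_betw_byWitness[where f'=\<Psi>])
    show "\<forall>fg\<in>?A. \<Psi> (\<Phi> fg) = fg"
    proof
      fix fg assume fg: "fg \<in> ?A"
      obtain f g where fg': "fg = (f,g)" by force
      have "f \<in> extensional {..<?s}" "g \<in> extensional {..<?s}"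
        using fg fg' unfolding cntset_def by (auto simp: PiE_def)
      then show "\<Psi> (\<Phi> fg) = fg" unfolding fg' \<Psi>_def \<Phi>_def
        by (auto simp: extensional_def)
    qed
    show "\<forall>Zh\<in>?A'. \<Phi> (\<Psi> Zh) = Zh"
    proof
      fix Zh assume Zh: "Zh \<in> ?A'"
      obtain Z h where Zh': "Zh = (Z,h)" by force
      have Z: "Z \<in> smats r u" and h: "h \<in> ?T Z" using Zh Zh' by auto
      have hE: "h \<in> extensional {..<?s}" and hP: "\<And>i. i < ?s \<Longrightarrow> h i \<in> {..<?t} \<times> {..<?t'}"
        using h unfolding cntset_def by (auto simp: PiE_def)
      have hv: "\<And>j k. j < ?t \<Longrightarrow> k < ?t' \<Longrightarrow> fib w h (j,k) = Z!j!k"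
        using h unfolding cntset_def by auto
      have 1: "Zm (fst (\<Psi> Zh)) (snd (\<Psi> Zh)) = Z"
      proof -
        have "fib w (\<lambda>i. (fst (\<Psi> Zh) i, snd (\<Psi> Zh) i)) (j,k) = fib w h (j,k)" for j k
          by (rule fib_cong) (auto simp: \<Psi>_def Zh' prod_eq_iff)
        then show ?thesis unfolding Zm_def
          using Z hv unfolding smats_def by (auto intro!: nth_equalityI)
      qed
      have 2: "(\<lambda>i\<in>{..<?s}. (fst (\<Psi> Zh) i, snd (\<Psi> Zh) i)) = h"
        using hE by (auto simp: \<Psi>_def Zh' extensional_def)
      show "\<Phi> (\<Psi> Zh) = Zh" unfolding \<Phi>_def using 1 2 Zh' by simp
    qed
    show "\<Phi> ` ?A \<subseteq> ?A'"
    proof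
      fix x assume "x \<in> \<Phi> ` ?A"
      then obtain f g where fg: "f \<in> cntset w {..<?t} (nth r)" "g \<in> cntset w {..<?t'} (nth u)"
        and x: "x = \<Phi> (f,g)" by auto
      have fr: "\<forall>i<?s. f i < ?t" "\<forall>i<?s. g i < ?t'" using fg unfolding cntset_def by auto
      have fv: "\<And>j. j < ?t \<Longrightarrow> fib w f j = r!j" "\<And>k. k < ?t' \<Longrightarrow> fib w g k = u!k"
        using fg unfolding cntset_def by auto
      have Zs: "Zm f g \<in> smats r u"
        unfolding smats_def
      proof (intro CollectI conjI allI impI)
        show "length (Zm f g) = ?t" by (simp add: Zm_def)
        fix j assume j: "j < ?t"
        show "length (Zm f g ! j) = ?t'" using j by (simp add: Zm_def)
        show "sum_list (Zm f g ! j) = r!j"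
          using j fib_pair_fst[OF fr(2), of f j] fv(1)[OF j]
          by (simp add: Zm_def sum_list_map_upt0)
      next
        fix k assume k: "k < ?t'"
        have "(\<Sum>j<?t. Zm f g ! j ! k) = (\<Sum>j<?t. fib w (\<lambda>i. (f i, g i)) (j,k))"
          using k by (intro sum.cong) (auto simp: Zm_def)
        then show "(\<Sum>j<?t. Zm f g ! j ! k) = u!k"
          using fib_pair_snd[OF fr(1), of g k] fv(2)[OF k] by simp
      qed
      have "(\<lambda>i\<in>{..<?s}. (f i, g i)) \<in> ?T (Zm f g)"
        unfolding cntset_def
      proof (intro CollectI conjI ballI)
        show "(\<lambda>i\<in>{..<?s}. (f i, g i)) \<in> {..<?s} \<rightarrow>\<^sub>E {..<?t} \<times> {..<?t'}" using fr by auto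
        fix jk assume jk: "jk \<in> {..<?t} \<times> {..<?t'}"
        then obtain j k where jk': "jk = (j,k)" "j < ?t" "k < ?t'" by auto
        have "fib w (\<lambda>i\<in>{..<?s}. (f i, g i)) (j,k) = fib w (\<lambda>i. (f i, g i)) (j,k)"
          by (rule fib_cong) auto
        then show "fib w (\<lambda>i\<in>{..<?s}. (f i, g i)) jk = (case jk of (j,k) \<Rightarrow> Zm f g ! j ! k)"
          using jk' by (simp add: Zm_def)
      qed
      then show "x \<in> ?A'" using Zs x unfolding \<Phi>_def by auto
    qed
    show "\<Psi> ` ?A' \<subseteq> ?A"
    proof
      fix x assume "x \<in> \<Psi> ` ?A'"
      then obtain Z h where Z: "Z \<in> smats r u" and h: "h \<in> ?T Z" and x: "x = \<Psi> (Z,h)" by auto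
      have hP: "\<And>i. i < ?s \<Longrightarrow> h i \<in> {..<?t} \<times> {..<?t'}"
        using h unfolding cntset_def by auto
      have hv: "\<And>j k. j < ?t \<Longrightarrow> k < ?t' \<Longrightarrow> fib w h (j,k) = Z!j!k"
        using h unfolding cntset_def by auto
      have hs: "(\<lambda>i. (fst (h i), snd (h i))) = h" by auto
      have a: "(\<lambda>i\<in>{..<?s}. fst (h i)) \<in> cntset w {..<?t} (nth r)"
        unfolding cntset_def
      proof (intro CollectI conjI ballI)
        show "(\<lambda>i\<in>{..<?s}. fst (h i)) \<in> {..<?s} \<rightarrow>\<^sub>E {..<?t}" using hP by (auto simp: mem_Times_iff)
        fix j assume j: "j \<in> {..<?t}"
        have "fib w (\<lambda>i\<in>{..<?s}. fst (h i)) j = fib w (\<lambda>i. fst (h i)) j" by (rule fib_cong) auto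
        also have "\<dots> = (\<Sum>k<?t'. fib w h (j,k))"
          using fib_pair_fst[of w "\<lambda>i. snd (h i)" ?t' "\<lambda>i. fst (h i)" j] hP hs by (force simp: mem_Times_iff)
        also have "\<dots> = (\<Sum>k<?t'. Z!j!k)" using hv j by auto
        also have "\<dots> = sum_list (Z!j)" using Z j unfolding smats_def by (simp add: sum_list_nth_sum)
        also have "\<dots> = r!j" using Z j unfolding smats_def by auto
        finally show "fib w (\<lambda>i\<in>{..<?s}. fst (h i)) j = r!j" .
      qed
      have b: "(\<lambda>i\<in>{..<?s}. snd (h i)) \<in> cntset w {..<?t'} (nth u)"
        unfolding cntset_def
      proof (intro CollectI conjI ballI)
        show "(\<lambda>i\<in>{..<?s}. snd (h i)) \<in> {..<?s} \<rightarrow>\<^sub>E {..<?t'}" using hP by (auto simp: mem_Times_iff)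
        fix k assume k: "k \<in> {..<?t'}"
        have "fib w (\<lambda>i\<in>{..<?s}. snd (h i)) k = fib w (\<lambda>i. snd (h i)) k" by (rule fib_cong) auto
        also have "\<dots> = (\<Sum>j<?t. fib w h (j,k))"
          using fib_pair_snd[of w "\<lambda>i. fst (h i)" ?t "\<lambda>i. snd (h i)" k] hP hs by (force simp: mem_Times_iff)
        also have "\<dots> = (\<Sum>j<?t. Z!j!k)" using hv k by auto
        also have "\<dots> = u!k" using Z k unfolding smats_def by auto
        finally show "fib w (\<lambda>i\<in>{..<?s}. snd (h i)) k = u!k" .
      qed
      show "x \<in> ?A" using a b x unfolding \<Psi>_def by auto
    qed
  qed
  have "card ?A = card ?A'" using bij by (rule bij_betw_same_card)
  moreover have "card ?A' = (\<Sum>Z\<in>smats r u. card (?T Z))"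
    by (rule card_SigmaI) (auto intro: finite_smats finite_cntset)
  ultimately show ?thesis by (simp add: card_cartesian_product)
qed



lemma oh_least: "a < t \<Longrightarrow> c \<noteq> 0 \<Longrightarrow> (LEAST j. j < t \<and> oh a c t ! j \<noteq> 0) = a"
  by (rule Least_equality) (auto simp: oh_nth split: if_splits)

lemma rowstruct:
  assumes Y: "Y \<in> smats w v" and c: "cZ Y = w" and w0: "0 \<notin> set w" and i: "i < length w"
  shows "\<exists>j<length v. Y!i = oh j (w!i) (length v)"
proof -
  have L: "length Y = length w" using Y smats_def by auto
  have "\<forall>y\<in>set Y. length (filter (\<lambda>x. x \<noteq> 0) y) = 1"
    using concat_filter_len[OF smats_pos[OF Y w0]] c L unfolding cZ_def by simp
  then have "length (filter (\<lambda>x. x \<noteq> 0) (Y!i)) = 1" using L i by auto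
  moreover have "length (Y!i) = length v" "sum_list (Y!i) = w!i" using Y i unfolding smats_def by auto
  ultimately show ?thesis using one_filter_oh by metis
qed

lemma claimA:
  assumes w0: "0 \<notin> set w"
  shows "mcoef w v w = card (cntset w {..<length v} (nth v))"
proof -
  let ?s = "length w" and ?t = "length v"
  let ?Y = "{Y \<in> smats w v. cZ Y = w}"
  let ?C = "cntset w {..<?t} (nth v)"
  have wpos: "\<And>i. i < ?s \<Longrightarrow> w!i \<noteq> 0" using w0 by (metis nth_mem)
  define F where "F f = map (\<lambda>i. oh (f i) (w!i) ?t) [0..<?s]" for f :: "nat \<Rightarrow> nat"
  define G where "G Y = (\<lambda>i\<in>{..<?s}. LEAST j. j < ?t \<and> Y!i!j \<noteq> 0)" for Y :: "nat list list"
  have "bij_betw G ?Y ?C"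
  proof (rule bij_betw_byWitness[where f'=F])
    show "\<forall>Y\<in>?Y. F (G Y) = Y"
    proof
      fix Y assume Y: "Y \<in> ?Y"
      have L: "length Y = ?s" using Y smats_def by auto
      show "F (G Y) = Y"
      proof (rule nth_equalityI)
        show "length (F (G Y)) = length Y" using L by (simp add: F_def)
        fix i assume "i < length (F (G Y))"
        then have i: "i < ?s" by (simp add: F_def)
        obtain j where j: "j < ?t" "Y!i = oh j (w!i) ?t" using rowstruct Y w0 i by blast
        have "G Y i = j" using i j wpos[OF i] oh_least by (simp add: G_def)
        then show "F (G Y) ! i = Y ! i" using i j by (simp add: F_def)
      qed
    qed
    show "\<forall>f\<in>?C. G (F f) = f"
    proof
      fix f assume f: "f \<in> ?C"
      show "G (F f) = f"
      proof
        fix i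
        show "G (F f) i = f i"
        proof (cases "i < ?s")
          case True
          then have "f i < ?t" using f unfolding cntset_def by auto
          then show ?thesis using True wpos oh_least by (simp add: G_def F_def)
        next
          case False
          then show ?thesis using f unfolding cntset_def G_def by (auto simp: PiE_def extensional_def)
        qed
      qed
    qed
    show "G ` ?Y \<subseteq> ?C"
    proof
      fix g assume "g \<in> G ` ?Y"
      then obtain Y where Y: "Y \<in> ?Y" and g: "g = G Y" by auto
      have rs: "\<And>i. i < ?s \<Longrightarrow> Y!i = oh (g i) (w!i) ?t \<and> g i < ?t"
      proof -
        fix i assume i: "i < ?s"
        obtain j where j: "j < ?t" "Y!i = oh j (w!i) ?t" using rowstruct Y w0 i by blast
        have "g i = j" using i j wpos[OF i] oh_least by (simp add: G_def g)
        then show "Y!i = oh (g i) (w!i) ?t \<and> g i < ?t" using j by simp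
      qed
      have "g \<in> {..<?s} \<rightarrow>\<^sub>E {..<?t}" using rs g by (auto simp: G_def)
      moreover have "fib w g k = v!k" if k: "k < ?t" for k
      proof -
        have "fib w g k = (\<Sum>i<?s. Y!i!k)"
          unfolding fib_def by (rule sum.cong) (use rs k in \<open>auto simp: oh_nth\<close>)
        then show ?thesis using Y k unfolding smats_def by auto
      qed
      ultimately show "g \<in> ?C" unfolding cntset_def by auto
    qed
    show "F ` ?C \<subseteq> ?Y"
    proof
      fix Y assume "Y \<in> F ` ?C"
      then obtain f where f: "f \<in> ?C" and Y: "Y = F f" by auto
      have ft: "\<And>i. i < ?s \<Longrightarrow> f i < ?t" using f unfolding cntset_def by auto
      have fv: "\<And>k. k < ?t \<Longrightarrow> fib w f k = v!k" using f unfolding cntset_def by auto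
      have "Y \<in> smats w v" unfolding smats_def
      proof (intro CollectI conjI allI impI)
        show "length Y = ?s" by (simp add: Y F_def)
        fix i assume i: "i < ?s"
        show "length (Y!i) = ?t" using i by (simp add: Y F_def)
        show "sum_list (Y!i) = w!i" using i ft oh_sum by (simp add: Y F_def)
      next
        fix k assume k: "k < ?t"
        have "(\<Sum>i<?s. Y!i!k) = fib w f k" unfolding fib_def
          by (rule sum.cong) (use k in \<open>auto simp: Y F_def oh_nth\<close>)
        then show "(\<Sum>i<?s. Y!i!k) = v!k" using fv k by simp
      qed
      moreover have "cZ Y = w"
      proof -
        have "map (filter (\<lambda>x. x \<noteq> 0)) Y = map (\<lambda>i. [w!i]) [0..<?s]"
          using ft wpos oh_filter by (simp add: Y F_def)
        then have "cZ Y = concat (map (\<lambda>i. [w!i]) [0..<?s])" unfolding cZ_def filter_concat by simp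
        also have "\<dots> = map (nth w) [0..<?s]" by (induction ?s) auto
        also have "\<dots> = w" by (rule map_nth)
        finally show ?thesis .
      qed
      ultimately show "Y \<in> ?Y" by auto
    qed
  qed
  then show ?thesis unfolding mcoef_def by (rule bij_betw_same_card)
qed



lemma aux_div: "y < t \<Longrightarrow> (x*t + y) div (t::nat) = x"
  by (simp add: div_add1_eq)

lemma filter_emb:
  "\<exists>e. inj_on e {..<length (filter P xs)} \<and>
     (\<forall>j<length (filter P xs). e j < length xs \<and> xs!(e j) = filter P xs ! j) \<and>
     (\<forall>i<length xs. P (xs!i) \<longrightarrow> i \<in> e ` {..<length (filter P xs)})"
proof (induction xs)
  case Nil then show ?case by auto
next
  case (Cons x xs)
  then obtain e where e1: "inj_on e {..<length (filter P xs)}"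
    and e2: "\<forall>j<length (filter P xs). e j < length xs \<and> xs!(e j) = filter P xs ! j"
    and e3: "\<forall>i<length xs. P (xs!i) \<longrightarrow> i \<in> e ` {..<length (filter P xs)}" by blast
  show ?case
  proof (cases "P x")
    case True
    define e' where "e' j = (if j = 0 then 0 else Suc (e (j - 1)))" for j
    have "inj_on e' {..<length (filter P (x#xs))}"
    proof (rule inj_onI)
      fix a b assume a: "a \<in> {..<length (filter P (x#xs))}" and b: "b \<in> {..<length (filter P (x#xs))}"
        and ab: "e' a = e' b"
      show "a = b"
      proof (cases "a = 0 \<or> b = 0")
        case True then show ?thesis using ab by (auto simp: e'_def split: if_splits)
      next
        case False
        then have "e (a - 1) = e (b - 1)" using ab by (simp add: e'_def)
        then have "a - 1 = b - 1" using e1 a b False True by (auto simp: inj_on_def)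
        then show ?thesis using False by arith
      qed
    qed
    moreover have "\<forall>j<length (filter P (x#xs)). e' j < length (x#xs) \<and> (x#xs)!(e' j) = filter P (x#xs) ! j"
    proof (intro allI impI)
      fix j assume j: "j < length (filter P (x#xs))"
      show "e' j < length (x#xs) \<and> (x#xs)!(e' j) = filter P (x#xs) ! j"
      proof (cases j)
        case 0 then show ?thesis using True by (simp add: e'_def)
      next
        case (Suc j')
        then have "j' < length (filter P xs)" using j True by simp
        then show ?thesis using e2 Suc True by (simp add: e'_def)
      qed
    qed
    moreover have "\<forall>i<length (x#xs). P ((x#xs)!i) \<longrightarrow> i \<in> e' ` {..<length (filter P (x#xs))}"
    proof (intro allI impI)
      fix i assume i: "i < length (x#xs)" and Pi: "P ((x#xs)!i)"
      show "i \<in> e' ` {..<length (filter P (x#xs))}"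
      proof (cases i)
        case 0 then show ?thesis using True by (auto simp: e'_def image_iff intro!: bexI[of _ 0])
      next
        case (Suc i')
        then obtain k where k: "k < length (filter P xs)" "i' = e k" using e3 i Pi by auto
        then have "e' (Suc k) = i" using Suc by (simp add: e'_def)
        then show ?thesis using k True by (auto simp: image_iff intro!: bexI[of _ "Suc k"])
      qed
    qed
    ultimately show ?thesis by blast
  next
    case False
    define e' where "e' j = Suc (e j)" for j
    have "inj_on e' {..<length (filter P (x#xs))}" using e1 False by (auto simp: e'_def inj_on_def)
    moreover have "\<forall>j<length (filter P (x#xs)). e' j < length (x#xs) \<and> (x#xs)!(e' j) = filter P (x#xs) ! j"
      using e2 False by (simp add: e'_def)
    moreover have "\<forall>i<length (x#xs). P ((x#xs)!i) \<longrightarrow> i \<in> e' ` {..<length (filter P (x#xs))}"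
    proof (intro allI impI)
      fix i assume i: "i < length (x#xs)" and Pi: "P ((x#xs)!i)"
      then obtain i' where Suc: "i = Suc i'" using False by (cases i) auto
      then obtain k where k: "k < length (filter P xs)" "i' = e k" using e3 i Pi by auto
      then show "i \<in> e' ` {..<length (filter P (x#xs))}" using Suc False by (auto simp: e'_def)
    qed
    ultimately show ?thesis by blast
  qed
qed

lemma concat_rect:
  assumes "\<forall>y\<in>set Z. length y = t'"
  shows "length (concat Z) = length Z * t'"
    "j < length Z \<Longrightarrow> k < t' \<Longrightarrow> concat Z ! (j * t' + k) = Z!j!k"
  using assms
proof (induction Z arbitrary: j)
  case Nil
  { case 1 then show ?case by simp }
  { case 2 then show ?case by simp }
next
  case (Cons y Z)
  { case 1 then show ?case using Cons by simp }
  { case 2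
    show ?case
    proof (cases j)
      case 0 then show ?thesis using 2 by (simp add: nth_append)
    next
      case (Suc j')
      have "concat (y#Z) ! (j * t' + k) = concat Z ! (j' * t' + k)"
        using Suc 2 by (simp add: nth_append)
      then show ?thesis using Cons 2 Suc by simp
    qed }
qed

lemma D_cZ:
  assumes Z: "Z \<in> smats a b" and w0: "0 \<notin> set w"
  shows "mcoef w (cZ Z) w = card (cntset w ({..<length a} \<times> {..<length b}) (\<lambda>(j,k). Z!j!k))"
proof -
  let ?t = "length a" and ?t' = "length b"
  let ?c = "concat Z"
  have LZ: "length Z = ?t" and rows: "\<forall>y\<in>set Z. length y = ?t'"
    using Z unfolding smats_def by (auto simp: in_set_conv_nth)
  have Lc: "length ?c = ?t * ?t'" using concat_rect(1)[OF rows] LZ by simp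
  have nc: "\<And>j k. j < ?t \<Longrightarrow> k < ?t' \<Longrightarrow> ?c ! (j * ?t' + k) = Z!j!k"
    using concat_rect(2)[OF rows] LZ by simp
  have s1: "mcoef w (cZ Z) w = card (cntset w {..<length (cZ Z)} (nth (cZ Z)))"
    by (rule claimA[OF w0])
  obtain e where e1: "inj_on e {..<length (cZ Z)}"
    and e2: "\<forall>j<length (cZ Z). e j < length ?c \<and> ?c!(e j) = cZ Z ! j"
    and e3: "\<forall>i<length ?c. ?c!i \<noteq> 0 \<longrightarrow> i \<in> e ` {..<length (cZ Z)}"
    using filter_emb[of "\<lambda>x. x \<noteq> 0" ?c] unfolding cZ_def by blast
  have s2: "card (cntset w {..<length (cZ Z)} (nth (cZ Z))) = card (cntset w {..<length ?c} (nth ?c))"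
    by (rule reindex[OF e1 _ _ _ w0]) (use e2 e3 in auto)
  define \<phi> where "\<phi> jk = fst jk * ?t' + snd jk" for jk :: "nat \<times> nat"
  have inj: "inj_on \<phi> ({..<?t} \<times> {..<?t'})"
  proof (rule inj_onI)
    fix x y assume x: "x \<in> {..<?t} \<times> {..<?t'}" and y: "y \<in> {..<?t} \<times> {..<?t'}" and e: "\<phi> x = \<phi> y"
    have "\<phi> x div ?t' = fst x" "\<phi> x mod ?t' = snd x" using x by (auto simp: \<phi>_def aux_div)
    moreover have "\<phi> y div ?t' = fst y" "\<phi> y mod ?t' = snd y" using y by (auto simp: \<phi>_def aux_div)
    ultimately show "x = y" using e by (simp add: prod_eq_iff)
  qed
  have lt: "\<And>j k. j < ?t \<Longrightarrow> k < ?t' \<Longrightarrow> j * ?t' + k < ?t * ?t'"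
  proof -
    fix j k assume "j < ?t" "k < ?t'"
    then have "j * ?t' + k < j * ?t' + ?t'" by simp
    also have "\<dots> = Suc j * ?t'" by simp
    also have "\<dots> \<le> ?t * ?t'" using \<open>j < ?t\<close> by (intro mult_le_mono1) simp
    finally show "j * ?t' + k < ?t * ?t'" .
  qed
  have surj: "{..<length ?c} \<subseteq> \<phi> ` ({..<?t} \<times> {..<?t'})"
  proof
    fix x assume "x \<in> {..<length ?c}"
    then have x: "x < ?t * ?t'" using Lc by simp
    then have tp: "?t' > 0" by (cases "?t' = 0") auto
    have "x div ?t' < ?t" using x tp div_less_iff_less_mult by auto
    moreover have "x mod ?t' < ?t'" using tp by simp
    moreover have "x = \<phi> (x div ?t', x mod ?t')" by (simp add: \<phi>_def)
    ultimately show "x \<in> \<phi> ` ({..<?t} \<times> {..<?t'})" by blast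
  qed
  have s3: "card (cntset w ({..<?t} \<times> {..<?t'}) (\<lambda>(j,k). Z!j!k)) = card (cntset w {..<length ?c} (nth ?c))"
    by (rule reindex[OF inj _ _ _ w0]) (use lt nc surj Lc in \<open>auto simp: \<phi>_def\<close>)
  show ?thesis using s1 s2 s3 by simp
qed



lemma identK:
  assumes a: "a \<in> comps n" and b: "b \<in> comps n" and w: "w \<in> comps n"
  shows "(\<Sum>r\<in>comps n. mcoef a b r * mcoef w r w) = mcoef w a w * mcoef w b w"
proof -
  have w0: "0 \<notin> set w" using w comps_def by auto
  have "(\<Sum>r\<in>comps n. mcoef a b r * mcoef w r w)
      = (\<Sum>r\<in>comps n. \<Sum>Z\<in>{Z \<in> smats a b. cZ Z = r}. mcoef w (cZ Z) w)"
    unfolding mcoef_def[of a b] by (rule sum.cong) auto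
  also have "\<dots> = (\<Sum>Z\<in>smats a b. mcoef w (cZ Z) w)"
    by (rule sum.group) (use finite_smats finite_comps cZ_comps[OF a] in auto)
  also have "\<dots> = (\<Sum>Z\<in>smats a b. card (cntset w ({..<length a} \<times> {..<length b}) (\<lambda>(j,k). Z!j!k)))"
    by (rule sum.cong[OF refl]) (erule D_cZ[OF _ w0])
  also have "\<dots> = mcoef w a w * mcoef w b w"
    using mackey[of w a b] claimA[OF w0, of a] claimA[OF w0, of b] by simp
  finally show ?thesis .
qed

definition chi :: "nat \<Rightarrow> nat list \<Rightarrow> (nat list \<Rightarrow> int) \<Rightarrow> int" where
  "chi n w f = (\<Sum>r\<in>comps n. f r * int (mcoef w r w))"

lemma chi_cong:
  assumes "\<forall>r\<in>comps n. [F r = G r] (mod P)"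
  shows "[chi n w F = chi n w G] (mod P)"
  unfolding chi_def using assms by (intro cong_sum cong_mult) auto

lemma chi_mult:
  assumes w: "w \<in> comps n"
  shows "[chi n w (smult n p f g) = chi n w f * chi n w g] (mod int p)"
proof -
  let ?d = "\<lambda>r. int (mcoef w r w)"
  let ?X = "\<lambda>r. \<Sum>a\<in>comps n. \<Sum>b\<in>comps n. f a * g b * int (mcoef a b r)"
  have "[chi n w (smult n p f g) = chi n w ?X] (mod int p)"
    by (rule chi_cong) (auto simp: smult_def cong_def)
  moreover have "chi n w ?X = chi n w f * chi n w g"
  proof -
    have "chi n w ?X = (\<Sum>r\<in>comps n. \<Sum>a\<in>comps n. \<Sum>b\<in>comps n. f a * g b * (int (mcoef a b r) * ?d r))"
      unfolding chi_def by (simp add: sum_distrib_right mult.assoc)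
    also have "\<dots> = (\<Sum>a\<in>comps n. \<Sum>r\<in>comps n. \<Sum>b\<in>comps n. f a * g b * (int (mcoef a b r) * ?d r))"
      by (rule sum.swap)
    also have "\<dots> = (\<Sum>a\<in>comps n. \<Sum>b\<in>comps n. \<Sum>r\<in>comps n. f a * g b * (int (mcoef a b r) * ?d r))"
      by (rule sum.cong[OF refl]) (rule sum.swap)
    also have "\<dots> = (\<Sum>a\<in>comps n. \<Sum>b\<in>comps n. f a * g b * int (\<Sum>r\<in>comps n. mcoef a b r * mcoef w r w))"
      by (simp add: sum_distrib_left)
    also have "\<dots> = (\<Sum>a\<in>comps n. \<Sum>b\<in>comps n. (f a * ?d a) * (g b * ?d b))"
      by (intro sum.cong refl) (simp add: identK w)
    also have "\<dots> = chi n w f * chi n w g"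
      unfolding chi_def by (simp add: sum_product)
    finally show ?thesis .
  qed
  ultimately show ?thesis by simp
qed

lemma cntset_one:
  assumes "sum_list w = n"
  shows "cntset w {..<1} (nth [n]) = {(\<lambda>i\<in>{..<length w}. 0::nat)}"
proof -
  have fs: "fib w (\<lambda>i\<in>{..<length w}. 0::nat) 0 = n"
    unfolding fib_def using assms by (simp add: sum_list_nth_sum)
  show ?thesis
  proof
    show "{(\<lambda>i\<in>{..<length w}. 0::nat)} \<subseteq> cntset w {..<1} (nth [n])"
      using fs unfolding cntset_def by auto
    show "cntset w {..<1} (nth [n]) \<subseteq> {(\<lambda>i\<in>{..<length w}. 0::nat)}"
    proof
      fix f assume "f \<in> cntset w {..<1} (nth [n])"
      then have "f \<in> {..<length w} \<rightarrow>\<^sub>E {..<1}" unfolding cntset_def by auto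
      then have "f = (\<lambda>i\<in>{..<length w}. 0::nat)"
        by (auto simp: PiE_def extensional_def fun_eq_iff)
      then show "f \<in> {(\<lambda>i\<in>{..<length w}. 0::nat)}" by simp
    qed
  qed
qed

lemma chi_sone:
  assumes w: "w \<in> comps n" and n: "n \<ge> 1" and p: "p \<ge> 2"
  shows "chi n w (sone n p) = 1"
proof -
  have nc: "[n] \<in> comps n" using n by (auto simp: comps_def)
  have w0: "0 \<notin> set w" and ws: "sum_list w = n" using w comps_def by auto
  have D: "mcoef w [n] w = 1"
    using claimA[OF w0, of "[n]"] cntset_one[OF ws] by simp
  have "chi n w (sone n p) = (\<Sum>r\<in>comps n. if r = [n] then int (mcoef w r w) else 0)"
    unfolding chi_def sone_def using p by (intro sum.cong) auto
  also have "\<dots> = 1" using nc D by (simp add: sum.delta finite_comps)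
  finally show ?thesis .
qed

lemma chi_ssub:
  "[chi n w (ssub n p f g) = chi n w f - chi n w g] (mod int p)"
proof -
  have "[chi n w (ssub n p f g) = chi n w (\<lambda>r. f r - g r)] (mod int p)"
    by (rule chi_cong) (auto simp: ssub_def cong_def)
  moreover have "chi n w (\<lambda>r. f r - g r) = chi n w f - chi n w g"
    unfolding chi_def by (simp add: sum_subtractf left_diff_distrib)
  ultimately show ?thesis by simp
qed

lemma chi_ssmul:
  "[chi n w (ssmul n p c f) = c * chi n w f] (mod int p)"
proof -
  have "[chi n w (ssmul n p c f) = chi n w (\<lambda>r. c * f r)] (mod int p)"
    by (rule chi_cong) (auto simp: ssmul_def cong_def)
  moreover have "chi n w (\<lambda>r. c * f r) = c * chi n w f"
    unfolding chi_def by (simp add: sum_distrib_left mult.assoc)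
  ultimately show ?thesis by simp
qed

lemma chi_jrad:
  assumes x: "x \<in> jrad n p" and w: "w \<in> comps n" and n: "n \<ge> 1" and p: "prime p"
  shows "[chi n w x = 0] (mod int p)"
proof (rule ccontr)
  assume na: "\<not> [chi n w x = 0] (mod int p)"
  let ?a = "chi n w x" and ?P = "int p"
  have p2: "p \<ge> 2" using p prime_ge_2_nat by blast
  have "\<not> ?P dvd ?a" using na by (simp add: cong_0_iff)
  then have "coprime ?P ?a" using p by (intro prime_imp_coprime) auto
  then have "coprime ?a ?P" by (simp add: coprime_commute)
  then obtain c where c: "[?a * c = 1] (mod ?P)" using cong_solve_coprime_int by blast
  define y where "y = ssmul n p c (sone n p)"
  have ysig: "y \<in> sig n p" using p2 unfolding y_def sig_def ssmul_def by auto
  then obtain z where z: "z \<in> sig n p" and zeq: "smult n p z (ssub n p (sone n p) (smult n p y x)) = sone n p"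
    using x unfolding jrad_def by blast
  let ?W = "ssub n p (sone n p) (smult n p y x)"
  have s1: "chi n w (sone n p) = 1" using chi_sone[OF w n p2] .
  have "[chi n w (smult n p z ?W) = chi n w z * chi n w ?W] (mod ?P)" by (rule chi_mult[OF w])
  then have e1: "[chi n w z * chi n w ?W = 1] (mod ?P)" using zeq s1 by (simp add: cong_sym)
  have e2: "[chi n w ?W = 1 - chi n w y * ?a] (mod ?P)"
  proof -
    have "[chi n w ?W = chi n w (sone n p) - chi n w (smult n p y x)] (mod ?P)" by (rule chi_ssub)
    moreover have "[chi n w (smult n p y x) = chi n w y * ?a] (mod ?P)" by (rule chi_mult[OF w])
    ultimately show ?thesis using s1 by (metis cong_diff cong_refl cong_trans)
  qed
  have e3: "[chi n w y = c] (mod ?P)" using chi_ssmul[of n w p c "sone n p"] s1 unfolding y_def by simp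
  have "[1 - chi n w y * ?a = 1 - c * ?a] (mod ?P)" by (intro cong_diff cong_mult e3 cong_refl)
  moreover have "[1 - c * ?a = 0] (mod ?P)"
    using c by (metis cong_diff cong_refl diff_self mult.commute)
  ultimately have "[chi n w ?W = 0] (mod ?P)" using e2 by (metis cong_trans)
  then have "[chi n w z * chi n w ?W = 0] (mod ?P)" by (metis cong_mult cong_refl mult_zero_right)
  then have "[1 = 0] (mod ?P)" using e1 by (metis cong_sym cong_trans)
  then have "?P dvd 1" by (simp add: cong_0_iff cong_sym_eq)
  then show False using p2 by simp
qed



lemma mcoef_nz:
  assumes q: "q \<in> comps n" and nz: "mcoef q r w \<noteq> 0"
  shows "length q \<le> length w" "length w = length q \<Longrightarrow> w = q"
proof -
  have "{Z \<in> smats q r. cZ Z = w} \<noteq> {}" using nz unfolding mcoef_def by (metis card.empty)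
  then obtain Z where Z: "Z \<in> smats q r" "cZ Z = w" by blast
  have q0: "0 \<notin> set q" using q comps_def by auto
  show "length q \<le> length w" using smats_cZ(1)[OF Z(1) q0] Z(2) by simp
  show "length w = length q \<Longrightarrow> w = q" using smats_cZ(2)[OF Z(1) q0] Z(2) by simp
qed

lemma smult_Y:
  assumes y: "y \<in> Yspace n p m" and x: "x \<in> jrad n p" and p: "prime p" and n: "n \<ge> 1"
  shows "smult n p y x \<in> Yspace n p (m + 1)"
proof -
  let ?P = "int p"
  have p0: "?P > 0" using p prime_gt_0_nat by simp
  have ysh: "\<And>q. length q < m \<Longrightarrow> y q = 0" using y unfolding Yspace_def by auto
  have "smult n p y x \<in> sig n p" unfolding sig_def smult_def using p0 by auto
  moreover have "smult n p y x w = 0" if w: "length w < m + 1" for w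
  proof (cases "w \<in> comps n")
    case False then show ?thesis by (simp add: smult_def)
  next
    case True
    let ?S = "\<Sum>q\<in>comps n. \<Sum>r\<in>comps n. y q * x r * int (mcoef q r w)"
    have other: "(\<Sum>r\<in>comps n. y q * x r * int (mcoef q r w)) = 0" if q: "q \<in> comps n" "q \<noteq> w" for q
    proof (rule sum.neutral, rule ballI)
      fix r assume "r \<in> comps n"
      show "y q * x r * int (mcoef q r w) = 0"
      proof (cases "y q = 0 \<or> mcoef q r w = 0")
        case True then show ?thesis by auto
      next
        case False
        then have "length q \<ge> m" using ysh by (meson not_le)
        moreover have "length q \<le> length w" using mcoef_nz(1)[OF q(1)] False by blast
        ultimately have "length w = length q" using w by simp
        then have "w = q" using mcoef_nz(2)[OF q(1)] False by blast
        then show ?thesis using q by simp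
      qed
    qed
    have "?S = (\<Sum>r\<in>comps n. y w * x r * int (mcoef w r w))"
      by (subst sum.remove[OF finite_comps True]) (simp add: other)
    also have "\<dots> = y w * chi n w x" unfolding chi_def by (simp add: sum_distrib_left mult.assoc)
    finally have S: "?S = y w * chi n w x" .
    have "[y w * chi n w x = y w * 0] (mod ?P)"
      by (intro cong_mult cong_refl chi_jrad[OF x True n p])
    then have "?S mod ?P = 0" using S by (simp add: cong_def)
    then show ?thesis using True by (simp add: smult_def)
  qed
  ultimately show ?thesis unfolding Yspace_def by auto
qed

theorem lemma3p1:
  fixes n p m :: nat
  assumes "n \<ge> 1" and "prime p" and "m \<ge> 1"
  shows "prodspan n p (Yspace n p m) (jrad n p) \<subseteq> Yspace n p (m + 1)"
proof
  have p0: "int p > 0" using assms(2) prime_gt_0_nat by simp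
  fix f assume "f \<in> prodspan n p (Yspace n p m) (jrad n p)"
  then show "f \<in> Yspace n p (m + 1)"
  proof (induction rule: prodspan.induct)
    case zero
    then show ?case using p0 unfolding Yspace_def sig_def szero_def by auto
  next
    case (prod y x)
    then show ?case using smult_Y assms by blast
  next
    case (add a b)
    then show ?case using p0 unfolding Yspace_def sig_def sadd_def by auto
  next
    case (smul a c)
    then show ?case using p0 unfolding Yspace_def sig_def ssmul_def by auto
  qed
qed

end
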